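(* Let $L\in\mathbb N$, $L\ge2$, ${\bf A}\in\mathbb R^{M\times N}$, ${\bf b}\in\mathbb R^M$ with ${\bf b}\neq0$, and assume $S_+=\{{\bf z}\ge0:{\bf A}{\bf z}={\bf b}\}$ is non-empty. Let $(r,{\bf u})$ follow the weight-normalized gradient flow with learning rates $\eta_r(t)=r(t)^2$, $\eta_{\bf u}=1$, with $r(0)>0$, ${\bf u}(0)>0$, $\|{\bf u}(0)\|_2=1$, and put ${\bf x}=\frac{r}{\|{\bf u}\|_2}{\bf u}$. Then $\lim_{t\to\infty}\mathcal L({\bf x}(t))=0$.
   Context: $\odot$ denotes entrywise power; vector inequalities are entrywise. Loss: $\mathcal L({\bf x})=\frac{1}{2L}\|{\bf A}{\bf x}^{\odot L}-{\bf b}\|_2^2$. Weight-normalized loss $\tilde{\mathcal L}(r,{\bf u})=\mathcal L\big(\frac{r}{\|{\bf u}\|_2}{\bf u}\big)$. Weight-normalized gradient flow: $\partial_t r=-\eta_r\nabla_r\tilde{\mathcal L}(r,{\bf u})$, $\partial_t{\bf u}=-\eta_{\bf u}\nabla_{\bf u}\tilde{\mathcal L}(r,{\bf u})$, $r(0)=r_0$, ${\bf u}(0)={\bf u}_0$. *)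

theory Defs
  imports "HOL-Analysis.Analysis"
begin

definition epow :: "real^'n \<Rightarrow> nat \<Rightarrow> real^'n" where
  "epow x L = (\<chi> i. (x $ i) ^ L)"

definition loss :: "nat \<Rightarrow> real^'n^'m \<Rightarrow> real^'m \<Rightarrow> real^'n \<Rightarrow> real" where
  "loss L A b x = (1 / (2 * real L)) * (norm (A *v epow x L - b))\<^sup>2"

definition wn_loss :: "nat \<Rightarrow> real^'n^'m \<Rightarrow> real^'m \<Rightarrow> real \<Rightarrow> real^'n \<Rightarrow> real" where
  "wn_loss L A b r u = loss L A b ((r / norm u) *\<^sub>R u)"

end

theory Submission
  imports Defs
begin


definition gg :: "nat \<Rightarrow> real^'n^'m \<Rightarrow> real^'m \<Rightarrow> real^'n \<Rightarrow> real^'n" where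
  "gg L A b y = (A *v epow y L - b) v* A"
definition grad :: "nat \<Rightarrow> real^'n^'m \<Rightarrow> real^'m \<Rightarrow> real^'n \<Rightarrow> real^'n" where
  "grad L A b y = (\<chi> i. (y$i)^(L-1) * gg L A b y $ i)"

lemma vec_nth_has_derivative[derivative_intros]: "((\<lambda>y. y$i) has_derivative (\<lambda>h. h$i)) F"
  by (rule bounded_linear_imp_has_derivative) (rule bounded_linear_vec_nth)

lemma loss_poly: "loss L A b = (\<lambda>y. (1/(2*real L)) * (\<Sum>j\<in>UNIV. ((\<Sum>i\<in>UNIV. A$j$i * (y$i)^L) - b$j)^2))"
  unfolding loss_def power2_norm_eq_inner inner_vec_def
  by (rule ext) (simp add: matrix_vector_mult_def epow_def power2_eq_square)

lemma loss_deriv: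
  assumes "1 \<le> L"
  shows "(loss L A b has_derivative (\<lambda>h. grad L A b y \<bullet> h)) (at y within S)"
  unfolding loss_poly
  apply (rule derivative_eq_intros refl)+
  apply (rule ext)
  apply (simp add: grad_def gg_def inner_vec_def vector_matrix_mult_def matrix_vector_mult_def epow_def sum_distrib_left sum_distrib_right)
  apply (subst sum.swap)
  apply (rule sum.cong, rule refl)+
  using assms apply (simp add: field_simps)
  done


definition G :: "nat \<Rightarrow> real \<Rightarrow> real" where
  "G L x = (if L = 2 then ln x else - 1 / ((real L - 2) * x^(L-2)))"

lemma G_deriv:
  assumes "L \<ge> 2" "x > 0"
  shows "(G L has_real_derivative 1 / x^(L-1)) (at x)"
proof (cases "L = 2")
  case True
  then have "G L = ln" by (auto simp: G_def)
  then show ?thesis using True assms by (auto intro!: derivative_eq_intros)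
next
  case False
  then have L3: "L \<ge> 3" using assms by auto
  then have e: "G L = (\<lambda>x. - 1 / ((real L - 2) * x^(L-2)))" using False by (auto simp: G_def)
  have "L - 2 - 1 = L - 3" "L - 1 = (L-3) + 2" "(L-2) = (L-3) + 1" using L3 by auto
  show ?thesis unfolding e
    apply (rule derivative_eq_intros refl)+
    using assms L3 apply simp
    proof -
    obtain k where k: "L = k + 3" using L3 by (metis add.commute le_Suc_ex)
    have "real (L - 2) = real L - 2" using L3 by (simp add: of_nat_diff)
    then show "(0 * ((real L - 2) * x ^ (L - 2)) -
      - 1 *
      (0 * x ^ (L - 2) +
       real (L - 2) * (1 * x ^ (L - 2 - Suc 0)) * (real L - 2))) /
     ((real L - 2) * x ^ (L - 2) * ((real L - 2) * x ^ (L - 2))) =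
     1 / x ^ (L - 1)"
    proof -
      have e1: "L - 2 - Suc 0 = k" "L - 2 = Suc k" "L - 1 = Suc (Suc k)" using k by auto
      define c where "c = real L - 2"
      have "c \<noteq> 0" "x^k > 0" using k assms by (auto simp: c_def)
      then show ?thesis unfolding e1 \<open>real (L - 2) = real L - 2\<close>[unfolded e1] c_def[symmetric] using assms
        by (simp add: field_simps)
    qed
  qed
qed

lemma G_le: assumes "L \<ge> 2" "x > 0" shows "G L x \<le> x"
proof (cases "L = 2")
  case True
  then show ?thesis using assms ln_le_minus_one[of x] by (simp add: G_def)
next
  case False
  then have "real L - 2 > 0" using assms by auto
  then have "(real L - 2) * x^(L-2) > 0" using assms by simp
  then have "- (1 / ((real L - 2) * x ^ (L - 2))) \<le> 0" by simp
  moreover have "G L x = - (1 / ((real L - 2) * x ^ (L - 2)))" using False by (simp add: G_def)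
  ultimately show ?thesis using assms by linarith
qed

lemma G_lower: assumes "L \<ge> 2" shows "\<exists>\<delta>>0. \<forall>x>0. G L x \<ge> - M \<longrightarrow> x \<ge> \<delta>"
proof (cases "L = 2")
  case True
  show ?thesis
  proof (intro exI[of _ "exp (-M)"] conjI allI impI)
    fix x :: real assume "x > 0" "G L x \<ge> - M"
    then have "ln x \<ge> -M" using True by (simp add: G_def)
    then show "x \<ge> exp (-M)" using \<open>x>0\<close> by (metis exp_ln exp_le_cancel_iff)
  qed simp
next
  case False
  then have c: "real L - 2 > 0" "L - 2 > 0" using assms by auto
  show ?thesis
  proof (cases "M > 0")
    case False
    show ?thesis
    proof (intro exI[of _ 1] conjI allI impI)
      fix x :: real assume "x > 0" "G L x \<ge> - M"
      moreover have "G L x < 0" using c \<open>x>0\<close> \<open>L \<noteq> 2\<close> by (simp add: G_def)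
      ultimately show "x \<ge> 1" using False by simp
    qed simp
  next
    case True
    define K where "K = 1 / ((real L - 2) * M)"
    have K: "K > 0" using True c by (simp add: K_def)
    define d where "d = K powr (1 / real (L-2))"
    have d: "d > 0" "d ^ (L-2) = K" using K c by (simp_all add: d_def powr_realpow[symmetric] powr_powr)
    show ?thesis
    proof (intro exI[of _ d] conjI allI impI)
      fix x :: real assume x: "x > 0" "G L x \<ge> - M"
      then have "- 1 / ((real L - 2) * x^(L-2)) \<ge> - M" using \<open>L \<noteq> 2\<close> by (simp add: G_def)
      then have "1 / ((real L - 2) * x^(L-2)) \<le> M" by simp
      then have "1 \<le> M * ((real L - 2) * x^(L-2))" using c x by (simp add: divide_le_eq)
      then have "K \<le> x ^ (L-2)" using c True by (simp add: K_def field_simps)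
      show "x \<ge> d"
      proof (rule ccontr)
        assume "\<not> x \<ge> d"
        then have "x ^ (L-2) < d ^ (L-2)" using x c by (intro power_strict_mono) auto
        then show False using d \<open>K \<le> x ^ (L-2)\<close> by simp
      qed
    qed (rule d)
  qed
qed



lemma loss_chain:
  assumes "1 \<le> L" "(f has_derivative f') (at x within s)"
  shows "((\<lambda>x. loss L A b (f x)) has_derivative (\<lambda>h. grad L A b (f x) \<bullet> f' h)) (at x within s)"
  using has_derivative_compose[OF assms(2) loss_deriv[OF assms(1), where S=UNIV and A=A and b=b]] by simp

lemma norm_chain:
  assumes "(f has_derivative f') (at x within s)" "f x \<noteq> 0"
  shows "((\<lambda>x. norm (f x)) has_derivative (\<lambda>h. f' h \<bullet> sgn (f x))) (at x within s)"
  using has_derivative_compose[OF assms(1) has_derivative_norm[OF assms(2)]] by simp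

lemma flow_point:
  fixes A :: "real^'n^'m" and v :: "real^'n"
  assumes L: "1 \<le> L" and v: "v \<noteq> 0"
    and dr: "((\<lambda>s. wn_loss L A b s v) has_real_derivative gr) (at R)"
    and du: "GDERIV (\<lambda>w. wn_loss L A b R w) v :> gu"
  defines "x \<equiv> (R / norm v) *\<^sub>R v"
  shows "gr = grad L A b x \<bullet> v / norm v"
    and "gu = (R / norm v) *\<^sub>R grad L A b x - (R * (grad L A b x \<bullet> v) / norm v ^ 3) *\<^sub>R v"
proof -
  have "((\<lambda>s. wn_loss L A b s v) has_derivative (\<lambda>h. grad L A b x \<bullet> ((h / norm v) *\<^sub>R v))) (at R)"
    unfolding wn_loss_def x_def
    by (rule loss_chain[OF L]) (use v in \<open>auto intro!: derivative_eq_intros\<close>)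
  moreover have "((\<lambda>s. wn_loss L A b s v) has_derivative (\<lambda>h. h * gr)) (at R)"
  proof -
    have "(\<lambda>h. h * gr) = (*) gr" by (rule ext) simp
    then show ?thesis using dr by (simp add: has_field_derivative_def)
  qed
  ultimately have "(\<lambda>h. grad L A b x \<bullet> ((h / norm v) *\<^sub>R v)) = (\<lambda>h. h * gr)"
    by (rule has_derivative_unique)
  from fun_cong[OF this, of 1] show "gr = grad L A b x \<bullet> v / norm v" by simp
  define D where "D = (\<lambda>h. grad L A b x \<bullet> ((R / norm v) *\<^sub>R h - (R * (v \<bullet> h) / norm v ^ 3) *\<^sub>R v))"
  have "((\<lambda>w. wn_loss L A b R w) has_derivative D) (at v)"
    unfolding wn_loss_def
    apply (rule has_derivative_eq_rhs)
     apply (rule loss_chain[OF L])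
     apply (rule derivative_eq_intros norm_chain refl)+
         apply (rule v)
        apply (simp add: v)
       apply (rule refl)
      apply (rule has_derivative_ident)
     apply (rule refl)
    unfolding D_def x_def
    apply (rule ext)
    apply (simp add: sgn_div_norm inner_commute[of _ v] inner_diff_right inner_add_right power3_eq_cube)
    apply (simp add: divide_inverse)
    done
  moreover have "((\<lambda>w. wn_loss L A b R w) has_derivative (\<lambda>h. h \<bullet> gu)) (at v)"
    using du by (simp add: gderiv_def)
  ultimately have e: "D = (\<lambda>h. h \<bullet> gu)"
    by (rule has_derivative_unique)
  define g where "g = (R / norm v) *\<^sub>R grad L A b x - (R * (grad L A b x \<bullet> v) / norm v ^ 3) *\<^sub>R v"
  have "\<And>h. h \<bullet> gu = h \<bullet> g"
    using fun_cong[OF e] unfolding D_def g_def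
    by (simp add: inner_diff_right inner_diff_left inner_commute algebra_simps)
  then have "(gu - g) \<bullet> gu = (gu - g) \<bullet> g" by blast
  then have "(gu - g) \<bullet> (gu - g) = 0"
    by (simp add: inner_diff_right)
  then show "gu = (R / norm v) *\<^sub>R grad L A b x - (R * (grad L A b x \<bullet> v) / norm v ^ 3) *\<^sub>R v"
    unfolding g_def[symmetric] by simp
qed



lemma deriv_nonpos_mono:
  fixes \<phi> :: "real \<Rightarrow> real"
  assumes "a \<le> b" "continuous_on {a..b} \<phi>"
    "\<And>t. a<t \<Longrightarrow> t<b \<Longrightarrow> (\<phi> has_real_derivative \<phi>' t) (at t)"
    "\<And>t. a<t \<Longrightarrow> t<b \<Longrightarrow> \<phi>' t \<le> 0"
  shows "\<phi> b \<le> \<phi> a"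
proof (cases "a = b")
  case False
  then have ab: "a < b" using assms by simp
  have "\<And>t. a<t \<Longrightarrow> t<b \<Longrightarrow> \<phi> differentiable (at t)"
    using assms(3) real_differentiable_def by blast
  from MVT[OF ab assms(2) this] obtain l z where
    z: "a<z" "z<b" "DERIV \<phi> z :> l" "\<phi> b - \<phi> a = (b-a)*l" by blast
  then have "l = \<phi>' z" using assms(3) DERIV_unique by blast
  then have "l \<le> 0" using assms(4) z by simp
  then have "(b-a)*l \<le> 0" using ab by (simp add: mult_nonneg_nonpos)
  then show ?thesis using z by simp
qed simp

lemma real_induct0:
  assumes "\<And>T. T \<ge> 0 \<Longrightarrow> (\<forall>s\<in>{0..<T}. P s) \<Longrightarrow> \<exists>e>0. \<forall>s\<in>{0..<T+e}. P s"
  shows "\<forall>t\<ge>0. P (t::real)"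
proof (rule ccontr)
  assume "\<not> (\<forall>t\<ge>0. P t)"
  then obtain t0 where t0: "t0 \<ge> 0" "\<not> P t0" by auto
  define S where "S = {T. T \<ge> 0 \<and> (\<forall>s\<in>{0..<T}. P s)}"
  have S0: "0 \<in> S" by (simp add: S_def)
  have Sb: "\<And>T. T \<in> S \<Longrightarrow> T \<le> t0"
    using t0 by (force simp: S_def)
  then have bdd: "bdd_above S" by (rule bdd_aboveI)
  define T where "T = Sup S"
  have T0: "T \<ge> 0" unfolding T_def using S0 bdd by (rule cSup_upper)
  have "\<forall>s\<in>{0..<T}. P s"
  proof
    fix s assume s: "s \<in> {0..<T}"
    then have "s < Sup S" by (simp add: T_def)
    then obtain T' where "T' \<in> S" "s < T'" using less_cSup_iff[OF _ bdd] S0 by blast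
    then show "P s" using s by (auto simp: S_def)
  qed
  from assms[OF T0 this] obtain e where e: "e > 0" "\<forall>s\<in>{0..<T+e}. P s" by blast
  then have "T + e \<in> S" using T0 by (simp add: S_def)
  then have "T + e \<le> T" unfolding T_def using bdd by (rule cSup_upper)
  then show False using e by simp
qed

lemma left_closed:
  assumes "continuous_on {0..} f" "T > (0::real)" "closed C" "\<forall>s\<in>{0..<T}. f s \<in> C"
  shows "f T \<in> C"
proof -
  have "T \<in> {0..}" using assms(2) by simp
  then have "(f \<longlongrightarrow> f T) (at T within {0..})" using assms(1) unfolding continuous_on_def by blast
  then have "(f \<longlongrightarrow> f T) (at T within {0..T})" by (rule tendsto_within_subset) auto
  then have "(f \<longlongrightarrow> f T) (at_left T)" using at_within_Icc_at_left[of 0 T] assms(2) by simp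
  moreover have "eventually (\<lambda>s. f s \<in> C) (at_left T)"
    by (rule eventually_mono[OF eventually_at_left_real[OF assms(2)]]) (use assms(4) in auto)
  ultimately show ?thesis using Lim_in_closed_set assms(3) trivial_limit_at_left_real by blast
qed

lemma right_open:
  fixes f :: "real \<Rightarrow> 'a::metric_space"
  assumes "continuous_on {0..} f" "T \<ge> (0::real)" "open U" "f T \<in> U"
  shows "\<exists>e>0. \<forall>s. T \<le> s \<and> s < T + e \<longrightarrow> f s \<in> U"
proof -
  obtain \<epsilon> where \<epsilon>: "\<epsilon> > 0" "ball (f T) \<epsilon> \<subseteq> U" using assms(3,4) open_contains_ball by blast
  obtain d where d: "d > 0" "\<forall>x'\<in>{0..}. dist x' T < d \<longrightarrow> dist (f x') (f T) < \<epsilon>"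
  proof -
    have "T \<in> {0..}" using assms(2) by simp
    from assms(1)[unfolded continuous_on_iff, rule_format, OF this \<epsilon>(1)]
    show ?thesis using that by blast
  qed
  show ?thesis
  proof (intro exI[of _ d] conjI allI impI)
    fix s assume s: "T \<le> s \<and> s < T + d"
    then have "dist s T < d" by (simp add: dist_real_def)
    moreover have "s \<in> {0..}" using s assms(2) by simp
    ultimately have "dist (f s) (f T) < \<epsilon>" using d(2) by blast
    then have "f s \<in> ball (f T) \<epsilon>" by (simp add: mem_ball dist_commute)
    then show "f s \<in> U" using \<epsilon>(2) by blast
  qed (rule d)
qed



lemma vd_comp:
  "(f has_vector_derivative f') F \<Longrightarrow> ((\<lambda>t. f t $ i) has_real_derivative f' $ i) F"
  unfolding has_field_derivative_def has_vector_derivative_def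
  apply (drule bounded_linear.has_derivative[OF bounded_linear_vec_nth[of i]])
  apply (erule has_derivative_eq_rhs)
  apply (rule ext) apply simp
  done

lemma normsq_vd:
  "(f has_vector_derivative f') (at t within S) \<Longrightarrow>
   ((\<lambda>t. norm (f t)^2) has_real_derivative 2 * (f t \<bullet> f')) (at t within S)"
  unfolding has_field_derivative_def has_vector_derivative_def power2_norm_eq_inner
  apply (frule has_derivative_inner[OF _ ])
   apply assumption
  apply (erule has_derivative_eq_rhs)
  apply (rule ext) apply (simp add: inner_commute)
  done

lemma within0_at:
  "(f has_real_derivative D) (at t within {0..}) \<Longrightarrow> 0 < t \<Longrightarrow> (f has_real_derivative D) (at t)"
  using at_within_interior[of t "{0..}"] interior_Ici[of "t-1" 0] by auto

lemma mono0:
  fixes \<phi> :: "real \<Rightarrow> real"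
  assumes "0 \<le> a" "a \<le> b"
    "\<And>t. a \<le> t \<Longrightarrow> t \<le> b \<Longrightarrow> (\<phi> has_real_derivative \<phi>' t) (at t within {0..})"
    "\<And>t. a<t \<Longrightarrow> t<b \<Longrightarrow> \<phi>' t \<le> 0"
  shows "\<phi> b \<le> \<phi> a"
proof (rule deriv_nonpos_mono[OF assms(2) _ _ assms(4)])
  show "continuous_on {a..b} \<phi>"
    unfolding continuous_on_eq_continuous_within
  proof
    fix t assume t: "t \<in> {a..b}"
    then have "a \<le> t" "t \<le> b" by auto
    then have "continuous (at t within {0..}) \<phi>" using assms(3) DERIV_continuous by blast
    then show "continuous (at t within {a..b}) \<phi>"
      by (rule continuous_within_subset) (use assms(1) in auto)
  qed
  show "\<And>t. a < t \<Longrightarrow> t < b \<Longrightarrow> (\<phi> has_real_derivative \<phi>' t) (at t)"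
    using assms(1,3) within0_at by force
qed

lemma cont_epow: "continuous_on S f \<Longrightarrow> continuous_on S (\<lambda>t. epow (f t) L)"
  unfolding epow_def by (intro continuous_intros)

lemma cont_gg: "continuous_on S f \<Longrightarrow> continuous_on S (\<lambda>t. gg L A b (f t))"
proof -
  assume f: "continuous_on S f"
  have "continuous_on S (\<lambda>t. transpose A *v (A *v epow (f t) L - b))"
    by (intro bounded_linear.continuous_on[OF matrix_vector_mul_bounded_linear] continuous_intros cont_epow f)
  then show ?thesis by (simp add: gg_def)
qed



theorem mainTheorem18:
  fixes L :: nat and A :: "real^'n^'m" and b :: "real^'m"
    and r :: "real \<Rightarrow> real" and u :: "real \<Rightarrow> real^'n"
  assumes "L \<ge> 2"
    and "b \<noteq> 0"
    and "\<exists>z. (\<forall>i. z $ i \<ge> 0) \<and> A *v z = b"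
    and flow: "\<forall>t\<ge>0. \<exists>gr gu.
               ((\<lambda>s. wn_loss L A b s (u t)) has_real_derivative gr) (at (r t)) \<and>
               (GDERIV (\<lambda>v. wn_loss L A b (r t) v) (u t) :> gu) \<and>
               (r has_real_derivative (- ((r t)\<^sup>2) * gr)) (at t within {0..}) \<and>
               (u has_vector_derivative (- gu)) (at t within {0..})"
    and "r 0 > 0"
    and "\<forall>i. u 0 $ i > 0"
    and "norm (u 0) = 1"
  shows "((\<lambda>t. loss L A b ((r t / norm (u t)) *\<^sub>R u t)) \<longlongrightarrow> 0) at_top"
proof -
  have L1: "1 \<le> L" using assms(1) by simp
  obtain z where z0: "\<forall>i. z$i \<ge> 0" and zb: "A *v z = b" using assms(3) by blast
  obtain GR GU where fl: "\<And>t. t \<ge> 0 \<Longrightarrow>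
     ((\<lambda>s. wn_loss L A b s (u t)) has_real_derivative GR t) (at (r t)) \<and>
               (GDERIV (\<lambda>v. wn_loss L A b (r t) v) (u t) :> GU t) \<and>
               (r has_real_derivative (- ((r t)\<^sup>2) * GR t)) (at t within {0..}) \<and>
               (u has_vector_derivative (- GU t)) (at t within {0..})"
    using flow by metis
  have cu: "continuous_on {0..} u"
    by (rule continuous_on_vector_derivative) (use fl in auto)
  have N: "\<forall>t\<ge>0. norm (u t) = 1"
  proof (rule real_induct0)
    fix T :: real assume T: "T \<ge> 0" and IH: "\<forall>s\<in>{0..<T}. norm (u s) = 1"
    have NT: "norm (u T) = 1"
    proof (cases "T = 0")
      case True then show ?thesis using assms(7) by simp
    next
      case False
      have "u T \<in> {v. norm v = 1}"
        by (rule left_closed[OF cu]) (use T False IH in \<open>auto intro: closed_Collect_eq continuous_intros\<close>)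
      then show ?thesis by simp
    qed
    have op: "open {v::real^'n. v \<noteq> 0}" by (intro open_Collect_neq continuous_intros)
    have "u T \<in> {v. v \<noteq> 0}" using NT by auto
    from right_open[OF cu T op this] obtain e where
      e: "e > 0" "\<forall>s. T \<le> s \<and> s < T + e \<longrightarrow> u s \<in> {v. v \<noteq> 0}" by blast
    have "\<forall>s\<in>{0..<T+e}. norm (u s) = 1"
    proof
      fix s assume s: "s \<in> {0..<T+e}"
      show "norm (u s) = 1"
      proof (cases "s < T")
        case True then show ?thesis using IH s by auto
      next
        case False
        then have Ts: "T \<le> s" by simp
        have D: "((\<lambda>t. norm (u t)^2) has_real_derivative 0) (at t within {0..})"
          if t: "T \<le> t" "t \<le> s" for t
        proof -
          have t0: "t \<ge> 0" and ut: "u t \<noteq> 0" using T e s t by auto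
          have "((\<lambda>t. norm (u t)^2) has_real_derivative 2 * (u t \<bullet> (- GU t))) (at t within {0..})"
            using normsq_vd fl[OF t0] by blast
          moreover have "u t \<bullet> GU t = 0"
          proof -
            have g: "GU t = (r t / norm (u t)) *\<^sub>R grad L A b ((r t / norm (u t)) *\<^sub>R u t) -
               (r t * (grad L A b ((r t / norm (u t)) *\<^sub>R u t) \<bullet> u t) / norm (u t) ^ 3) *\<^sub>R u t"
              using flow_point(2)[OF L1 ut] fl[OF t0] by blast
            have nn: "u t \<bullet> u t = norm (u t)^2" by (simp add: power2_norm_eq_inner)
            show ?thesis unfolding g using ut
              by (simp add: inner_diff_right nn inner_commute power2_eq_square power3_eq_cube)
          qed
          ultimately show ?thesis by simp
        qed
        have "norm (u s)^2 \<le> norm (u T)^2"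
          by (rule mono0[where \<phi>'="\<lambda>_. 0", OF _ Ts D]) (use T in auto)
        moreover have "- (norm (u s)^2) \<le> - (norm (u T)^2)"
          by (rule mono0[where \<phi>'="\<lambda>_. - 0", OF _ Ts DERIV_minus[OF D]]) (use T in auto)
        ultimately have "norm (u s)^2 = 1^2" using NT by simp
        then show ?thesis using norm_ge_zero power2_eq_iff_nonneg zero_le_one by blast
      qed
    qed
    then show "\<exists>e>0. \<forall>s\<in>{0..<T+e}. norm (u s) = 1" using e(1) by blast
  qed

  define y where "y = (\<lambda>t. r t *\<^sub>R u t)"
  have Dy: "(y has_vector_derivative (- ((norm (y t))^2)) *\<^sub>R grad L A b (y t)) (at t within {0..})"
    if t0: "t \<ge> 0" for t
  proof -
    have n1: "norm (u t) = 1" using N t0 by simp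
    then have ut: "u t \<noteq> 0" by auto
    have xe: "(r t / norm (u t)) *\<^sub>R u t = y t" using n1 by (simp add: y_def)
    have f1: "((\<lambda>s. wn_loss L A b s (u t)) has_real_derivative GR t) (at (r t))"
      and f2: "GDERIV (\<lambda>v. wn_loss L A b (r t) v) (u t) :> GU t" using fl[OF t0] by auto
    have gr: "GR t = grad L A b (y t) \<bullet> u t"
      using flow_point(1)[OF L1 ut f1 f2] n1 xe by simp
    have gu: "GU t = r t *\<^sub>R grad L A b (y t) - (r t * (grad L A b (y t) \<bullet> u t)) *\<^sub>R u t"
      using flow_point(2)[OF L1 ut f1 f2] n1 xe by simp
    have ny: "norm (y t)^2 = (r t)^2" using n1 by (simp add: y_def power_mult_distrib)
    have hv: "(y has_vector_derivative (r t *\<^sub>R (- GU t) + (- ((r t)^2 * GR t)) *\<^sub>R u t)) (at t within {0..})"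
      unfolding y_def by (rule has_vector_derivative_scaleR) (use fl[OF t0] in auto)
    have nn: "norm (y t) * norm (y t) = r t * r t" using ny by (simp add: power2_eq_square)
    show ?thesis by (rule has_vector_derivative_eq_rhs[OF hv]) (simp add: gr gu nn algebra_simps power2_eq_square)
  qed
  have cy: "continuous_on {0..} y"
    by (rule continuous_on_vector_derivative) (use Dy in auto)
  have Dyi: "((\<lambda>t. y t $ i) has_real_derivative - ((norm (y t))^2) * ((y t $ i)^(L-1) * gg L A b (y t) $ i)) (at t within {0..})"
    if t0: "t \<ge> 0" for t i
    using vd_comp[OF Dy[OF t0], of i] by (simp add: grad_def)
  have P: "\<forall>t\<ge>0. \<forall>i. y t $ i > 0"
  proof (rule real_induct0)
    fix T :: real assume T: "T \<ge> 0" and IH: "\<forall>s\<in>{0..<T}. \<forall>i. y s $ i > 0"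
    have PT: "\<forall>i. y T $ i > 0"
    proof (cases "T = 0")
      case True then show ?thesis using assms(5,6) by (simp add: y_def)
    next
      case False then have Tp: "T > 0" using T by simp
      show ?thesis
      proof
        fix i
        define k where "k t = norm (y t)^2 * gg L A b (y t) $ i" for t
        have cyT: "continuous_on {0..T} y" by (rule continuous_on_subset[OF cy]) auto
        have ck: "continuous_on {0..T} k" unfolding k_def
          by (intro continuous_intros cont_gg cyT)
        then have "compact (k ` {0..T})" by (rule compact_continuous_image) simp
        then have "bounded (k ` {0..T})" by (rule compact_imp_bounded)
        then obtain B where B: "\<forall>t\<in>{0..T}. \<bar>k t\<bar> \<le> B" unfolding bounded_real by auto
        have B0: "B \<ge> 0" using B[rule_format, of 0] T by auto
        obtain \<delta> where \<delta>: "\<delta> > 0" "\<forall>x>0. G L x \<ge> - (B*T - G L (y 0 $ i)) \<longrightarrow> x \<ge> \<delta>"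
          using G_lower[OF assms(1)] by blast
        have "\<forall>s\<in>{0..<T}. y s \<in> {v. v $ i \<ge> \<delta>}"
        proof
          fix t assume t: "t \<in> {0..<T}"
          define \<phi> where "\<phi> s = -(G L (y s $ i) + B * s)" for s
          define \<phi>' where "\<phi>' s = -(1 / (y s $ i)^(L-1) * (- ((norm (y s))^2) * ((y s $ i)^(L-1) * gg L A b (y s) $ i)) + B)" for s
          have "\<phi> t \<le> \<phi> 0"
          proof (rule mono0[of 0 t \<phi> \<phi>'])
            show "0 \<le> (0::real)" by simp
            show "0 \<le> t" using t by auto
          next
            fix s assume s: "0 \<le> s" "s \<le> t"
            then have pos: "y s $ i > 0" using IH t by auto
            have h1: "((\<lambda>s. G L (y s $ i)) has_real_derivative
                1 / (y s $ i)^(L-1) * (- ((norm (y s))^2) * ((y s $ i)^(L-1) * gg L A b (y s) $ i))) (at s within {0..})"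
              by (rule DERIV_chain2[OF G_deriv[OF assms(1) pos] Dyi]) (use s in simp)
            have h2: "((\<lambda>x. B * x) has_real_derivative B) (at s within {0..})"
              by (auto intro!: derivative_eq_intros)
            show "(\<phi> has_real_derivative \<phi>' s) (at s within {0..})"
              unfolding \<phi>_def[abs_def] \<phi>'_def by (rule DERIV_minus[OF DERIV_add[OF h1 h2]])
          next
            fix s assume s: "0 < s" "s < t"
            then have pos: "y s $ i > 0" using IH t by auto
            have "\<bar>k s\<bar> \<le> B" using B s t by auto
            then show "\<phi>' s \<le> 0"
              using pos by (simp add: k_def \<phi>'_def)
          qed
          then have "G L (y t $ i) \<ge> G L (y 0 $ i) - B*t" by (simp add: \<phi>_def)
          moreover have "B*t \<le> B*T" using B0 t by (simp add: mult_left_mono)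
          ultimately have "G L (y t $ i) \<ge> - (B*T - G L (y 0 $ i))" by simp
          moreover have "y t $ i > 0" using IH t by auto
          ultimately show "y t \<in> {v. v $ i \<ge> \<delta>}" using \<delta> by auto
        qed
        then have "y T \<in> {v. v $ i \<ge> \<delta>}"
          by (intro left_closed[OF cy Tp]) (auto intro: closed_halfspace_component_ge_cart)
        then show "y T $ i > 0" using \<delta> by simp
      qed
    qed
    have op: "open {v::real^'n. \<forall>i. 0 < v $ i}"
    proof -
      have "{v::real^'n. \<forall>i. 0 < v $ i} = (\<Inter>i\<in>UNIV. {v. v $ i > 0})" by auto
      moreover have "open (\<Inter>i\<in>UNIV. {v::real^'n. v $ i > 0})"
        by (rule open_INT) (auto intro: open_halfspace_component_gt_cart)
      ultimately show ?thesis by simp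
    qed
    have "y T \<in> {v::real^'n. \<forall>i. 0 < v $ i}" using PT by auto
    from right_open[OF cy T op this] obtain e where
      e: "e > 0" "\<forall>s. T \<le> s \<and> s < T + e \<longrightarrow> y s \<in> {v. \<forall>i. 0 < v $ i}" by blast
    have "\<forall>s\<in>{0..<T+e}. \<forall>i. 0 < y s $ i"
    proof
      fix s assume s: "s \<in> {0..<T+e}"
      show "\<forall>i. 0 < y s $ i"
      proof (cases "s < T")
        case True then show ?thesis using IH s by auto
      next
        case False then show ?thesis using e s by auto
      qed
    qed
    then show "\<exists>e>0. \<forall>s\<in>{0..<T+e}. \<forall>i. 0 < y s $ i" using e(1) by blast
  qed
  define F where "F v = (\<Sum>i\<in>UNIV. (v$i)^2/2 - z$i * G L (v$i))" for v :: "real^'n"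
  define W where "W t = (norm (A *v epow (y t) L - b))^2" for t
  define \<rho> where "\<rho> t = (norm (y t))^2" for t
  define yd where "yd t i = - (\<rho> t * ((y t $ i)^(L-1) * gg L A b (y t) $ i))" for t i
  have Dyi': "((\<lambda>t. y t $ i) has_real_derivative yd t i) (at t within {0..})" if "t \<ge> 0" for t i
    using Dyi[OF that, of i] by (simp add: yd_def \<rho>_def)
  have DF: "((\<lambda>t. F (y t)) has_real_derivative - (\<rho> t * W t)) (at t within {0..})" if t0: "t \<ge> 0" for t
  proof -
    have pos: "y t $ i > 0" for i using P t0 by auto
    have Dterm: "((\<lambda>t. (y t $ i)^2/2 - z$i * G L (y t $ i)) has_real_derivative
        (y t $ i * yd t i - z$i * (1 / (y t $ i)^(L-1) * yd t i))) (at t within {0..})" for i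
    proof -
      have a: "((\<lambda>x. x^2/2) has_real_derivative y t $ i) (at (y t $ i))"
        by (auto intro!: derivative_eq_intros)
      have h1: "((\<lambda>t. (y t $ i)^2/2) has_real_derivative y t $ i * yd t i) (at t within {0..})"
        using DERIV_chain2[OF a Dyi'[OF t0, of i]] by simp
      have h2: "((\<lambda>t. G L (y t $ i)) has_real_derivative 1 / (y t $ i)^(L-1) * yd t i) (at t within {0..})"
        by (rule DERIV_chain2[OF G_deriv[OF assms(1) pos] Dyi'[OF t0]])
      show ?thesis by (rule DERIV_diff[OF h1 DERIV_cmult[OF h2]])
    qed
    have DS: "((\<lambda>t. F (y t)) has_real_derivative
        (\<Sum>i\<in>UNIV. y t $ i * yd t i - z$i * (1 / (y t $ i)^(L-1) * yd t i))) (at t within {0..})"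
      unfolding F_def by (rule DERIV_sum) (rule Dterm)
    obtain k where k: "L = Suc k" using L1 by (metis Suc_pred' less_le_trans zero_less_one)
    have e1: "y t $ i * yd t i - z$i * (1 / (y t $ i)^(L-1) * yd t i)
        = - \<rho> t * ((epow (y t) L - z) $ i * gg L A b (y t) $ i)" for i
    proof -
      have pi: "y t $ i > 0" using pos by simp
      then have "y t $ i ^ k > 0" by simp
      then show ?thesis unfolding yd_def k using pi by (simp add: epow_def field_simps)
    qed
    have e2: "(\<Sum>i\<in>UNIV. (epow (y t) L - z) $ i * gg L A b (y t) $ i) = W t"
    proof -
      have "(\<Sum>i\<in>UNIV. (epow (y t) L - z) $ i * gg L A b (y t) $ i) = gg L A b (y t) \<bullet> (epow (y t) L - z)"
        by (simp add: inner_vec_def mult.commute)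
      also have "\<dots> = (A *v epow (y t) L - b) \<bullet> (A *v (epow (y t) L - z))"
        by (simp add: gg_def dot_lmul_matrix)
      also have "\<dots> = W t"
        by (simp add: W_def matrix_vector_mult_diff_distrib zb power2_norm_eq_inner)
      finally show ?thesis .
    qed
    have "(\<Sum>i\<in>UNIV. y t $ i * yd t i - z$i * (1 / (y t $ i)^(L-1) * yd t i)) = - (\<rho> t * W t)"
      unfolding e1 e2[symmetric] by (simp add: sum_distrib_left sum_negf)
    then show ?thesis using DS by simp
  qed
  have rho0: "\<rho> t \<ge> 0" for t by (simp add: \<rho>_def)
  have W0: "W t \<ge> 0" for t by (simp add: W_def)
  have FM: "F (y t) \<le> F (y 0)" if t0: "t \<ge> 0" for t
    by (rule mono0[of 0 t "\<lambda>t. F (y t)" "\<lambda>t. - (\<rho> t * W t)"])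
       (use t0 DF rho0 W0 in \<open>auto simp: mult_nonneg_nonneg\<close>)
  have term_lb: "(v$i)^2/2 - z$i * G L (v$i) \<ge> - ((z$i)^2/2)" if "v$i > 0" for v :: "real^'n" and i
  proof -
    have "z$i * G L (v$i) \<le> z$i * v$i" using G_le[OF assms(1) that] z0 by (simp add: mult_left_mono)
    moreover have "(v$i - z$i)^2 \<ge> 0" by simp
    ultimately show ?thesis by (simp add: power2_eq_square algebra_simps)
  qed
  define Z where "Z = (\<Sum>i\<in>UNIV. (z$i)^2/2)"
  have FLB: "F (y t) \<ge> - Z" if t0: "t \<ge> 0" for t
  proof -
    have "(\<Sum>i\<in>UNIV. - ((z$i)^2/2)) \<le> F (y t)" unfolding F_def
      by (rule sum_mono) (use term_lb P t0 in auto)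
    then show ?thesis by (simp add: Z_def sum_negf)
  qed
  have "z \<noteq> 0" using zb assms(2) by auto
  then obtain k where "z $ k \<noteq> 0" by (auto simp: vec_eq_iff)
  then have zk: "z $ k > 0" using z0[rule_format, of k] by linarith
  define M1 where "M1 = (F (y 0) + Z) / z$k"
  obtain \<delta> where \<delta>: "\<delta> > 0" "\<forall>x>0. G L x \<ge> - M1 \<longrightarrow> x \<ge> \<delta>"
    using G_lower[OF assms(1)] by blast
  have yk: "y t $ k \<ge> \<delta>" if t0: "t \<ge> 0" for t
  proof -
    have pos: "y t $ i > 0" for i using P t0 by auto
    have "F (y t) = ((y t$k)^2/2 - z$k * G L (y t$k)) + (\<Sum>i\<in>UNIV-{k}. (y t$i)^2/2 - z$i * G L (y t$i))"
      unfolding F_def by (rule sum.remove) auto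
    moreover have "(\<Sum>i\<in>UNIV-{k}. (y t$i)^2/2 - z$i * G L (y t$i)) \<ge> (\<Sum>i\<in>UNIV-{k}. - ((z$i)^2/2))"
      by (rule sum_mono) (use term_lb pos in auto)
    moreover have "(\<Sum>i\<in>UNIV-{k}. - ((z$i)^2/2)) \<ge> - Z"
    proof -
      have "(\<Sum>i\<in>UNIV-{k}. (z$i)^2/2) \<le> Z" unfolding Z_def
        by (rule sum_mono2) auto
      then show ?thesis by (simp add: sum_negf)
    qed
    moreover have "(y t$k)^2/2 \<ge> 0" by simp
    ultimately have "- z$k * G L (y t$k) \<le> F (y 0) + Z" using FM[OF t0] by linarith
    then have "- G L (y t$k) \<le> M1" using zk unfolding M1_def by (simp add: field_simps)
    then show ?thesis using \<delta> pos by auto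
  qed
  have rho_lb: "\<rho> t \<ge> \<delta>^2" if t0: "t \<ge> 0" for t
  proof -
    have "\<delta> \<le> \<bar>y t $ k\<bar>" using yk[OF t0] by simp
    also have "\<dots> \<le> norm (y t)" by (rule component_le_norm_cart)
    finally show ?thesis unfolding \<rho>_def using \<delta> by (simp add: power_mono)
  qed
  define lL where "lL t = loss L A b (y t)" for t
  define gn where "gn t = grad L A b (y t) \<bullet> grad L A b (y t)" for t
  have Dl: "(lL has_real_derivative - (\<rho> t * gn t)) (at t within {0..})" if t0: "t \<ge> 0" for t
  proof -
    have "(y has_derivative (\<lambda>h. h *\<^sub>R (- \<rho> t *\<^sub>R grad L A b (y t)))) (at t within {0..})"
      using Dy[OF t0] by (simp add: has_vector_derivative_def \<rho>_def)
    from loss_chain[OF L1 this, where A=A and b=b]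
    have "(lL has_derivative (\<lambda>h. grad L A b (y t) \<bullet> (h *\<^sub>R (- \<rho> t *\<^sub>R grad L A b (y t))))) (at t within {0..})"
      unfolding lL_def[abs_def] .
    then show ?thesis unfolding has_field_derivative_def
      by (rule has_derivative_eq_rhs) (auto simp: gn_def)
  qed
  have l0: "lL t \<ge> 0" for t by (simp add: lL_def loss_def)
  have gn0: "gn t \<ge> 0" for t by (simp add: gn_def)
  have Wl: "W t = 2 * real L * lL t" for t using L1 by (simp add: W_def lL_def loss_def)
  define C where "C = 2 * real L * \<delta>^2"
  have C0: "C > 0" using L1 \<delta> by (simp add: C_def)
  have Phi: "F (y t) + C * t * lL t \<le> F (y 0)" if t0: "t \<ge> 0" for t
  proof -
    have "F (y t) + C * (t * lL t) \<le> F (y 0) + C * (0 * lL 0)"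
    proof (rule mono0[of 0 t "\<lambda>t. F (y t) + C * (t * lL t)"
          "\<lambda>t. - (\<rho> t * W t) + C * (lL t + t * (- (\<rho> t * gn t)))"])
      show "0 \<le> (0::real)" by simp
      show "0 \<le> t" by (rule t0)
    next
      fix s assume s: "0 \<le> s" "s \<le> t"
      have h0: "((\<lambda>t. t) has_real_derivative 1) (at s within {0..})" by (rule DERIV_ident)
      have h: "((\<lambda>t. t * lL t) has_real_derivative 1 * lL s + (- (\<rho> s * gn s)) * s) (at s within {0..})"
        by (rule DERIV_mult[OF h0 Dl[OF s(1)]])
      have "((\<lambda>t. F (y t) + C * (t * lL t)) has_real_derivative
          - (\<rho> s * W s) + C * (1 * lL s + (- (\<rho> s * gn s)) * s)) (at s within {0..})"
        by (rule DERIV_add[OF DF[OF s(1)] DERIV_cmult[OF h]])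
      then show "((\<lambda>t. F (y t) + C * (t * lL t)) has_real_derivative
          - (\<rho> s * W s) + C * (lL s + s * (- (\<rho> s * gn s)))) (at s within {0..})"
        by (rule DERIV_cong) (simp add: mult.commute)
    next
      fix s assume s: "0 < s" "s < t"
      have "C * lL s \<le> \<rho> s * W s"
      proof -
        have "C * lL s = 2 * real L * lL s * \<delta>^2" by (simp add: C_def)
        also have "\<dots> \<le> 2 * real L * lL s * \<rho> s"
          by (rule mult_left_mono) (use rho_lb s l0 in auto)
        finally show ?thesis by (simp add: Wl mult.commute mult.left_commute)
      qed
      moreover have "C * (s * (\<rho> s * gn s)) \<ge> 0"
        using C0 s rho0 gn0 by (simp add: mult_nonneg_nonneg)
      ultimately show "- (\<rho> s * W s) + C * (lL s + s * (- (\<rho> s * gn s))) \<le> 0"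
        by (simp add: algebra_simps)
    qed
    then show ?thesis by (simp add: mult.assoc)
  qed
  define K where "K = F (y 0) + Z"
  have bound: "lL t \<le> K / (C * t)" if t0: "t > 0" for t
  proof -
    have "C * t * lL t \<le> K" using Phi[of t] FLB[of t] t0 by (simp add: K_def)
    then show ?thesis using C0 t0 by (simp add: field_simps)
  qed
  have xy: "loss L A b ((r t / norm (u t)) *\<^sub>R u t) = lL t" if "t \<ge> 0" for t
    using N that by (simp add: lL_def y_def)
  have lim: "((\<lambda>t. K / (C * t)) \<longlongrightarrow> 0) at_top"
  proof -
    have "((\<lambda>t. (K / C) * inverse t) \<longlongrightarrow> (K / C) * 0) at_top"
      by (intro tendsto_mult tendsto_const tendsto_inverse_0_at_top filterlim_ident)
    then show ?thesis by (simp add: divide_inverse mult.commute mult.left_commute)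
  qed
  show ?thesis
  proof (rule tendsto_sandwich[OF _ _ tendsto_const lim])
    show "eventually (\<lambda>t. 0 \<le> loss L A b ((r t / norm (u t)) *\<^sub>R u t)) at_top"
      by (rule always_eventually) (simp add: loss_def)
    show "eventually (\<lambda>t. loss L A b ((r t / norm (u t)) *\<^sub>R u t) \<le> K / (C * t)) at_top"
      unfolding eventually_at_top_linorder
      by (intro exI[of _ 1] allI impI) (simp add: xy bound)
  qed
qed


end
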